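(* Consider a 3-S 3-D MUN-D with time-varying LECs (as in the context), $n>d_{max}$, and let $i,j\in\{1,2,3\}$ be such that the min-cut between $S_i$ and $T_j$ is at least $1$. Then the determinant of the $n\times n$ matrix $M_{ij}$ is a nonzero polynomial in $\underline{\varepsilon}'=(\underline{\varepsilon}^{(-d_{max})},\underline{\varepsilon}^{(-d_{max}+1)},\dots,\underline{\varepsilon}^{(n-1)})$.
   Context: A 3-S 3-D MUN-D is a finite directed acyclic graph whose links carry one field symbol per time unit with unit delay, with sources $S_1,S_2,S_3$ (one process each) and destinations $T_1,T_2,T_3$ (one output each), $T_i$ demanding $S_i$'s process, min-cut between $S_i$ and $T_i$ equal to $1$. Linear network coding is used with time-varying LECs: $\underline{\varepsilon}^{(t)}$ denotes the vector of LECs in use at time $t$ (a link symbol at time $t+1$ is a combination, with coefficients from $\underline{\varepsilon}^{(t)}$, of the tail source symbol and incoming link symbols at time $t$; the destination output at time $t$ uses coefficients from $\underline{\varepsilon}^{(t)}$). The outputs satisfy $Y_j^{(t)}=\sum_{i=1}^3\sum_{d=0}^{d_{max}}M_{ij}^{(d)}(\underline{\varepsilon}^{(t-d,t)})X_i^{(t-d)}$, where $M_{ij}^{(d)}(\underline{\varepsilon}^{(t-d,t)})$ (the response at $T_j$ at time $t$ to a unit symbol sent by $S_i$ at time $t-d$) is a polynomial in the LECs used at times $t-d,\dots,t$, and $d_{max}$ bounds the relevant path delays (after removing a common delay). Each source sends $n$ generations $X_i^{(0)},\dots,X_i^{(n-1)}$ preceded by the cyclic prefix $X_i^{(-d)}=X_i^{(n-d)}$,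 $1\le d\le d_{max}$, starting at time $-d_{max}$. $M_{ij}$ is the $n\times n$ matrix with rows and columns indexed $0,\dots,n-1$ whose entry in row $r$ and column $(r+d)\bmod n$ is $M_{ij}^{(d)}(\underline{\varepsilon}^{(n-1-r-d,\,n-1-r)})$ for $0\le d\le d_{max}$, all other entries being $0$; thus $[Y_j^{(n-1)}\cdots Y_j^{(0)}]^T=\sum_i M_{ij}[X_i^{(n-1)}\cdots X_i^{(0)}]^T$. *)

theory Defs
  imports "HOL-Library.Poly_Mapping" "Jordan_Normal_Form.Determinant"
begin

definition is_path :: "'e set \<Rightarrow> ('e \<Rightarrow> 'v) \<Rightarrow> ('e \<Rightarrow> 'v) \<Rightarrow> 'v \<Rightarrow> 'v \<Rightarrow> 'e list \<Rightarrow> bool" where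
  "is_path Es tail head u v p \<longleftrightarrow>
     p \<noteq> [] \<and> set p \<subseteq> Es \<and> tail (hd p) = u \<and> head (last p) = v \<and>
     (\<forall>k. Suc k < length p \<longrightarrow> head (p ! k) = tail (p ! Suc k))"

definition acyclic_net :: "'e set \<Rightarrow> ('e \<Rightarrow> 'v) \<Rightarrow> ('e \<Rightarrow> 'v) \<Rightarrow> bool" where
  "acyclic_net Es tail head \<longleftrightarrow> (\<forall>v p. \<not> is_path Es tail head v v p)"

definition connected_net :: "'e set \<Rightarrow> ('e \<Rightarrow> 'v) \<Rightarrow> ('e \<Rightarrow> 'v) \<Rightarrow> 'v \<Rightarrow> 'v \<Rightarrow> bool" where
  "connected_net Es tail head u v \<longleftrightarrow> (\<exists>p. is_path Es tail head u v p)"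

definition mincut :: "'e set \<Rightarrow> ('e \<Rightarrow> 'v) \<Rightarrow> ('e \<Rightarrow> 'v) \<Rightarrow> 'v \<Rightarrow> 'v \<Rightarrow> nat" where
  "mincut Es tail head u v =
     (LEAST k. \<exists>C. C \<subseteq> Es \<and> card C = k \<and> \<not> connected_net (Es - C) tail head u v)"

text \<open>Names of local encoding coefficients (LECs):
  Src i e : coefficient of the source symbol of S_i on link e (tail e = s i);
  Lnk e' e : coefficient of incoming link e' on outgoing link e (head e' = tail e);
  Out e' j : coefficient of incoming link e' in the output of T_j (head e' = t j).
  A variable of the polynomial ring is a pair (time, LEC name).\<close>
datatype 'e lec = Src nat 'e | Lnk 'e 'e | Out 'e nat

type_synonym ('e, 'a) lecpoly = "((int \<times> 'e lec) \<Rightarrow>\<^sub>0 nat) \<Rightarrow>\<^sub>0 'a"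

definition pvar :: "int \<times> 'e lec \<Rightarrow> ('e, 'a::comm_ring_1) lecpoly" where
  "pvar x = Poly_Mapping.single (Poly_Mapping.single x 1) 1"

text \<open>Symbol on link e, k time units after S_i sent a unit symbol at time \<tau>0
  (all other source symbols zero), as a polynomial in the time-indexed LECs.\<close>
fun link_sym :: "'e set \<Rightarrow> ('e \<Rightarrow> 'v) \<Rightarrow> ('e \<Rightarrow> 'v) \<Rightarrow> (nat \<Rightarrow> 'v) \<Rightarrow> nat \<Rightarrow> int \<Rightarrow> nat
                 \<Rightarrow> 'e \<Rightarrow> ('e, 'a::comm_ring_1) lecpoly" where
  "link_sym Es tail head s i \<tau>0 0 e = 0"
| "link_sym Es tail head s i \<tau>0 (Suc k) e =
     (if k = 0 \<and> tail e = s i then pvar (\<tau>0, Src i e) else 0)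
     + (\<Sum>e'\<in>{e'\<in>Es. head e' = tail e}. pvar (\<tau>0 + int k, Lnk e' e) * link_sym Es tail head s i \<tau>0 k e')"

text \<open>Response at T_j at time \<tau>0 + k to a unit symbol sent by S_i at time \<tau>0.\<close>
definition response :: "'e set \<Rightarrow> ('e \<Rightarrow> 'v) \<Rightarrow> ('e \<Rightarrow> 'v) \<Rightarrow> (nat \<Rightarrow> 'v) \<Rightarrow> (nat \<Rightarrow> 'v)
                      \<Rightarrow> nat \<Rightarrow> nat \<Rightarrow> int \<Rightarrow> nat \<Rightarrow> ('e, 'a::comm_ring_1) lecpoly" where
  "response Es tail head s t i j \<tau>0 k =
     (\<Sum>e'\<in>{e'\<in>Es. head e' = t j}. pvar (\<tau>0 + int k, Out e' j) * link_sym Es tail head s i \<tau>0 k e')"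

text \<open>M_ij^(d) at (shifted) output time t: response to the symbol sent at time t - d,
  observed at real time t + \<delta>, where \<delta> is the common delay removed.\<close>
definition Md :: "'e set \<Rightarrow> ('e \<Rightarrow> 'v) \<Rightarrow> ('e \<Rightarrow> 'v) \<Rightarrow> (nat \<Rightarrow> 'v) \<Rightarrow> (nat \<Rightarrow> 'v)
                 \<Rightarrow> nat \<Rightarrow> nat \<Rightarrow> nat \<Rightarrow> nat \<Rightarrow> int \<Rightarrow> ('e, 'a::comm_ring_1) lecpoly" where
  "Md Es tail head s t \<delta> i j d tt = response Es tail head s t i j (tt - int d) (d + \<delta>)"

text \<open>The n x n matrix M_ij: entry (r, (r+d) mod n) is M_ij^(d) at time n-1-r, 0 \<le> d \<le> dmax.
  (For n > dmax the positions (r+d) mod n, d \<le> dmax, are pairwise distinct.)\<close>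
definition Mmat :: "'e set \<Rightarrow> ('e \<Rightarrow> 'v) \<Rightarrow> ('e \<Rightarrow> 'v) \<Rightarrow> (nat \<Rightarrow> 'v) \<Rightarrow> (nat \<Rightarrow> 'v)
                   \<Rightarrow> nat \<Rightarrow> nat \<Rightarrow> nat \<Rightarrow> nat \<Rightarrow> nat \<Rightarrow> ('e, 'a::comm_ring_1) lecpoly mat" where
  "Mmat Es tail head s t \<delta> dmax n i j =
     mat n n (\<lambda>(r, c). \<Sum>d\<in>{d. d \<le> dmax \<and> (r + d) mod n = c}.
                          Md Es tail head s t \<delta> i j d (int n - 1 - int r))"

end

theory Submission
  imports Defs
begin

definition ev :: "'x set \<Rightarrow> (('x \<Rightarrow>\<^sub>0 nat) \<Rightarrow>\<^sub>0 'a::comm_ring_1) \<Rightarrow> 'a" where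
  "ev V p = (\<Sum>m. (Poly_Mapping.lookup p m when Poly_Mapping.keys m \<subseteq> V))"

lemma keys_add_nat: "Poly_Mapping.keys (a + b :: 'x \<Rightarrow>\<^sub>0 nat) = Poly_Mapping.keys a \<union> Poly_Mapping.keys b"
  by (auto simp: in_keys_iff lookup_add)

lemma fin_supp: "finite {m. (Poly_Mapping.lookup p m when P m) \<noteq> 0}"
  by (rule finite_subset[OF _ finite_keys[of p]]) (auto simp: in_keys_iff)

lemma ev_add: "ev V (p + q) = ev V p + ev V q"
  unfolding ev_def lookup_add when_add_distrib
  by (rule Sum_any.distrib) (rule fin_supp)+

lemma ev_one: fixes V :: "'x set" shows "ev V (1::('x \<Rightarrow>\<^sub>0 nat) \<Rightarrow>\<^sub>0 'a::comm_ring_1) = 1"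
proof -
  have "(\<lambda>a. (Poly_Mapping.lookup (1::('x \<Rightarrow>\<^sub>0 nat) \<Rightarrow>\<^sub>0 'a) a when Poly_Mapping.keys a \<subseteq> V)) = (\<lambda>a. (\<lambda>_. 1::'a) a when a = 0)"
    by (auto simp: fun_eq_iff when_def lookup_one)
  then show ?thesis unfolding ev_def by (simp only: Sum_any_when_equal)
qed

lemma ev_zero: "ev V 0 = 0"
  unfolding ev_def by simp

lemma ev_mult: "ev V (p * q) = ev V p * ev V q"
proof -
  let ?f = "Poly_Mapping.lookup p" and ?g = "Poly_Mapping.lookup q"
  let ?K = "Poly_Mapping.keys p \<times> Poly_Mapping.keys q"
  have fk: "finite ?K" by simp
  have lm: "Poly_Mapping.lookup (p * q) m = (\<Sum>(a, b). ?f a * ?g b when m = a + b)" for m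
    unfolding lookup_mult using prod_fun_unfold_prod[of ?f ?g m]
    by (simp add: prod_fun_def in_keys_iff[symmetric])
  have "ev V (p * q) = (\<Sum>m. \<Sum>(a, b). (?f a * ?g b when Poly_Mapping.keys (a+b) \<subseteq> V) when m = a + b)"
    unfolding ev_def lm
  proof (rule Sum_any.cong)
    fix m
    show "((\<Sum>(a, b). ?f a * ?g b when m = a + b) when Poly_Mapping.keys m \<subseteq> V) =
          (\<Sum>(a, b). (?f a * ?g b when Poly_Mapping.keys (a+b) \<subseteq> V) when m = a + b)"
    proof (cases "Poly_Mapping.keys m \<subseteq> V")
      case True
      then show ?thesis by (auto simp: when_def split_def intro!: Sum_any.cong)
    next
      case False
      then have "\<And>ab. ((case ab of (a, b) \<Rightarrow> (?f a * ?g b when Poly_Mapping.keys (a+b) \<subseteq> V) when m = a + b)) = 0"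
        by (auto simp: when_def split: if_splits)
      then show ?thesis using False by (simp add: when_def)
    qed
  qed
  also have "\<dots> = (\<Sum>(m, ab). (case ab of (a, b) \<Rightarrow> ?f a * ?g b when Poly_Mapping.keys (a+b) \<subseteq> V) when m = (case ab of (a,b) \<Rightarrow> a + b))"
    apply (subst Sum_any.cartesian_product[of "((\<lambda>(a,b). a+b) ` ?K) \<times> ?K"])
      apply simp
    apply (auto simp: split_def when_def in_keys_iff dest: mult_not_zero split: if_splits)
    apply (rule_tac x="(ab, ba)" in image_eqI)
     apply (auto simp: in_keys_iff dest: mult_not_zero)
    done
  also have "\<dots> = (\<Sum>(a, b). ?f a * ?g b when Poly_Mapping.keys (a+b) \<subseteq> V)"
    by (subst Sum_any_when_dependent_prod_left) (simp add: split_def)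
  also have "\<dots> = (\<Sum>(a, b). (?f a when Poly_Mapping.keys a \<subseteq> V) * (?g b when Poly_Mapping.keys b \<subseteq> V))"
    by (rule Sum_any.cong) (auto simp: keys_add_nat when_def)
  also have "\<dots> = (\<Sum>a. \<Sum>b. (?f a when Poly_Mapping.keys a \<subseteq> V) * (?g b when Poly_Mapping.keys b \<subseteq> V))"
    apply (subst Sum_any.cartesian_product[of ?K, symmetric])
      apply simp
     apply (auto simp: when_def in_keys_iff dest: mult_not_zero)
    done
  also have "\<dots> = ev V p * ev V q"
    unfolding ev_def by (rule Sum_any_product[symmetric]) (rule fin_supp)+
  finally show ?thesis .
qed

interpretation ev_hom: comm_ring_hom "ev V"
  by unfold_locales (auto simp: ev_add ev_mult ev_one ev_zero)

lemma ev_pvar: fixes V :: "(int \<times> 'e lec) set" shows "ev V (pvar x :: ((int \<times> 'e lec) \<Rightarrow>\<^sub>0 nat) \<Rightarrow>\<^sub>0 'a::comm_ring_1) = (if x \<in> V then 1 else 0)"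
proof -
  have "(\<lambda>a. (Poly_Mapping.lookup (pvar x :: ((int \<times> 'e lec) \<Rightarrow>\<^sub>0 nat) \<Rightarrow>\<^sub>0 'a) a when Poly_Mapping.keys a \<subseteq> V)) = (\<lambda>a. (\<lambda>_. if x \<in> V then 1 else 0::'a) a when a = Poly_Mapping.single x 1)"
    by (auto simp: fun_eq_iff when_def lookup_single pvar_def)
  then show ?thesis unfolding ev_def by (simp only: Sum_any_when_equal)
qed


lemma conn_of_mincut:
  assumes "mincut Es tail head u v \<ge> 1"
  shows "connected_net Es tail head u v"
proof (rule ccontr)
  assume "\<not> connected_net Es tail head u v"
  then have "mincut Es tail head u v = 0"
    unfolding mincut_def by (intro Least_eq_0) (rule exI[of _ "{}"], simp)
  with assms show False by simp
qed

lemma path_distinct: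
  assumes acyc: "acyclic_net Es tail head" and P: "is_path Es tail head u v p"
  shows "distinct p"
proof (rule ccontr)
  assume "\<not> distinct p"
  then obtain a b where ab: "a < b" "b < length p" "p ! a = p ! b"
    by (metis distinct_conv_nth linorder_neqE_nat)
  define q where "q = take (b - a) (drop a p)"
  have lq: "length q = b - a" using ab by (simp add: q_def)
  have qn: "\<And>k. k < b - a \<Longrightarrow> q ! k = p ! (a + k)" using ab by (simp add: q_def)
  have qne: "q \<noteq> []" using lq ab by auto
  have "is_path Es tail head (tail (p ! a)) (tail (p ! a)) q"
    unfolding is_path_def
  proof (intro conjI allI impI)
    show "q \<noteq> []" using lq ab by auto
    show "set q \<subseteq> Es" using P unfolding is_path_def q_def
      by (meson order_trans set_drop_subset set_take_subset)
    show "tail (hd q) = tail (p ! a)" using lq ab qn[of 0] qne by (simp add: hd_conv_nth)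
    have "last q = p ! (b - 1)" using lq ab qn[of "b - a - 1"] qne
      by (simp add: last_conv_nth)
    moreover have "head (p ! (b - 1)) = tail (p ! b)"
      using P ab unfolding is_path_def by (metis Suc_pred' gr_zeroI less_nat_zero_code not_less0 less_imp_le_nat order.strict_trans1)
    ultimately show "head (last q) = tail (p ! a)" using ab by simp
    fix k assume "Suc k < length q"
    then show "head (q ! k) = tail (q ! Suc k)"
      using lq qn[of k] qn[of "Suc k"] P ab unfolding is_path_def by simp
  qed
  with acyc show False unfolding acyclic_net_def by blast
qed


definition Vset :: "nat \<Rightarrow> nat \<Rightarrow> 'e list \<Rightarrow> (int \<times> 'e lec) set" where
  "Vset i j p = {x. snd x = Src i (hd p) \<or> snd x = Out (last p) j \<or>
                  (\<exists>m. Suc m < length p \<and> snd x = Lnk (p ! m) (p ! Suc m))}"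

lemma link_ev:
  assumes fin: "finite Es" and P: "is_path Es tail head (s i) v p" and D: "distinct p"
  shows "ev (Vset i j p) (link_sym Es tail head s i \<tau>0 k e :: ('e,'a::comm_ring_1) lecpoly)
         = (if 0 < k \<and> k \<le> length p \<and> e = p ! (k - 1) then 1 else 0)"
proof (induction k arbitrary: e)
  case 0
  then show ?case by simp
next
  case (Suc k)
  let ?V = "Vset i j p"
  let ?L = "length p"
  have pne: "p \<noteq> []" and pEs: "set p \<subseteq> Es" and ptail: "tail (hd p) = s i"
    and pcons: "\<And>k. Suc k < ?L \<Longrightarrow> head (p ! k) = tail (p ! Suc k)"
    using P unfolding is_path_def by auto
  have hd0: "hd p = p ! 0" using pne by (simp add: hd_conv_nth)
  have srcpart: "ev ?V ((if k = 0 \<and> tail e = s i then pvar (\<tau>0, Src i e) else 0) :: ('e,'a) lecpoly)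
     = (if k = 0 \<and> e = p ! 0 then 1 else 0)"
    using ptail hd0 by (auto simp: ev_pvar Vset_def)
  have lnk: "((\<tau>0 + int k, Lnk e' e) \<in> ?V) \<longleftrightarrow> (\<exists>m. Suc m < ?L \<and> e' = p ! m \<and> e = p ! Suc m)" for e'
    by (auto simp: Vset_def)
  have sumpart: "ev ?V (\<Sum>e'\<in>{e'\<in>Es. head e' = tail e}. pvar (\<tau>0 + int k, Lnk e' e) * link_sym Es tail head s i \<tau>0 k e' :: ('e,'a) lecpoly)
     = (if 0 < k \<and> k < ?L \<and> e = p ! k then 1 else 0)"
  proof -
    have "ev ?V (\<Sum>e'\<in>{e'\<in>Es. head e' = tail e}. pvar (\<tau>0 + int k, Lnk e' e) * link_sym Es tail head s i \<tau>0 k e' :: ('e,'a) lecpoly)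
      = (\<Sum>e'\<in>{e'\<in>Es. head e' = tail e}. (if (\<tau>0 + int k, Lnk e' e) \<in> ?V then 1 else 0) *
            (if 0 < k \<and> k \<le> ?L \<and> e' = p ! (k - 1) then 1 else 0 :: 'a))"
      by (simp add: ev_hom.hom_sum ev_hom.hom_mult ev_pvar Suc.IH)
    also have "\<dots> = (\<Sum>e'\<in>{e'\<in>Es. head e' = tail e}. if e' = p ! (k - 1) then
            (if (\<tau>0 + int k, Lnk e' e) \<in> ?V \<and> 0 < k \<and> k \<le> ?L then 1 else 0) else 0 :: 'a)"
      by (rule sum.cong) auto
    also have "\<dots> = (if p ! (k - 1) \<in> {e'\<in>Es. head e' = tail e} then
            (if (\<tau>0 + int k, Lnk (p ! (k - 1)) e) \<in> ?V \<and> 0 < k \<and> k \<le> ?L then 1 else 0) else 0)"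
      using fin by (simp add: sum.delta)
    also have "\<dots> = (if 0 < k \<and> k < ?L \<and> e = p ! k then 1 else 0)"
    proof (cases "0 < k \<and> k < ?L \<and> e = p ! k")
      case True
      then have "(\<tau>0 + int k, Lnk (p ! (k - 1)) e) \<in> ?V" unfolding lnk
        by (intro exI[of _ "k - 1"]) auto
      moreover have "p ! (k - 1) \<in> Es" using True pEs by auto
      moreover have "head (p ! (k - 1)) = tail e" using True pcons[of "k - 1"] by auto
      ultimately show ?thesis using True by auto
    next
      case False
      have "\<not> ((\<tau>0 + int k, Lnk (p ! (k - 1)) e) \<in> ?V \<and> 0 < k \<and> k \<le> ?L)"
      proof
        assume a: "(\<tau>0 + int k, Lnk (p ! (k - 1)) e) \<in> ?V \<and> 0 < k \<and> k \<le> ?L"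
        then obtain m where m: "Suc m < ?L" "p ! (k - 1) = p ! m" "e = p ! Suc m"
          unfolding lnk by blast
        then have "k - 1 = m" using D a nth_eq_iff_index_eq[of p "k - 1" m] by auto
        then show False using False a m by auto
      qed
      then show ?thesis using False by auto
    qed
    finally show ?thesis .
  qed
  show ?case
    by (simp only: link_sym.simps ev_hom.hom_add srcpart sumpart) (use pne in \<open>auto simp: Suc_le_eq\<close>)
qed

lemma resp_ev:
  assumes fin: "finite Es" and P: "is_path Es tail head (s i) (t j) p" and D: "distinct p"
  shows "ev (Vset i j p) (response Es tail head s t i j \<tau>0 k :: ('e,'a::comm_ring_1) lecpoly)
         = (if k = length p then 1 else 0)"
proof -
  let ?V = "Vset i j p"
  let ?L = "length p"
  have pne: "p \<noteq> []" and pEs: "set p \<subseteq> Es" and phead: "head (last p) = t j"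
    using P unfolding is_path_def by auto
  have lst: "last p = p ! (?L - 1)" using pne by (simp add: last_conv_nth)
  have "ev ?V (response Es tail head s t i j \<tau>0 k :: ('e,'a) lecpoly)
     = (\<Sum>e'\<in>{e'\<in>Es. head e' = t j}. (if (\<tau>0 + int k, Out e' j) \<in> ?V then 1 else 0) *
            (if 0 < k \<and> k \<le> ?L \<and> e' = p ! (k - 1) then 1 else 0 :: 'a))"
    unfolding response_def
    by (simp add: ev_hom.hom_sum ev_hom.hom_mult ev_pvar link_ev[where s=s and i=i and v="t j", OF fin P D])
  also have "\<dots> = (\<Sum>e'\<in>{e'\<in>Es. head e' = t j}. if e' = p ! (k - 1) then
            (if (\<tau>0 + int k, Out e' j) \<in> ?V \<and> 0 < k \<and> k \<le> ?L then 1 else 0) else 0 :: 'a)"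
    by (rule sum.cong) auto
  also have "\<dots> = (if p ! (k - 1) \<in> {e'\<in>Es. head e' = t j} then
            (if (\<tau>0 + int k, Out (p ! (k - 1)) j) \<in> ?V \<and> 0 < k \<and> k \<le> ?L then 1 else 0) else 0)"
    using fin by (simp add: sum.delta)
  also have "\<dots> = (if k = ?L then 1 else 0)"
  proof (cases "k = ?L")
    case True
    then show ?thesis using pne pEs phead lst by (auto simp: Vset_def)
  next
    case False
    have "\<not> ((\<tau>0 + int k, Out (p ! (k - 1)) j) \<in> ?V \<and> 0 < k \<and> k \<le> ?L)"
    proof
      assume a: "(\<tau>0 + int k, Out (p ! (k - 1)) j) \<in> ?V \<and> 0 < k \<and> k \<le> ?L"
      then have "p ! (k - 1) = p ! (?L - 1)" using lst by (auto simp: Vset_def)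
      then have "k - 1 = ?L - 1" using D a pne nth_eq_iff_index_eq[of p "k - 1" "?L - 1"] by auto
      then show False using False a by auto
    qed
    then show ?thesis using False by auto
  qed
  finally show ?thesis .
qed


lemma mod_add_canc: "((x::nat) + d) mod n = (y + d) mod n \<Longrightarrow> x mod n = y mod n"
  by (simp add: add.assoc add.commute nat_mod_eq_iff)

lemma shift_permutes:
  fixes n d :: nat
  assumes "n > 0"
  shows "(\<lambda>r. if r < n then (r + d) mod n else r) permutes {0..<n}"
proof (rule bij_imp_permutes)
  let ?f = "\<lambda>r. if r < n then (r + d) mod n else r"
  have inj: "inj_on ?f {0..<n}"
  proof (rule inj_onI)
    fix x y assume "x \<in> {0..<n}" "y \<in> {0..<n}" "?f x = ?f y"
    then have "(x + d) mod n = (y + d) mod n" "x < n" "y < n" by auto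
    then have "x mod n = y mod n" using mod_add_canc[of x d n y] by blast
    then show "x = y" using \<open>x < n\<close> \<open>y < n\<close> by simp
  qed
  have sub: "?f ` {0..<n} \<subseteq> {0..<n}" using assms by auto
  have im: "?f ` {0..<n} = {0..<n}" by (rule endo_inj_surj[OF _ sub inj]) simp
  show "bij_betw ?f {0..<n} {0..<n}"
    unfolding bij_betw_def using inj im by blast
qed auto

theorem lemma5:
  fixes Es :: "'e set" and tail head :: "'e \<Rightarrow> 'v" and s t :: "nat \<Rightarrow> 'v"
    and \<delta> dmax n i j :: nat
  assumes fin: "finite Es"
    and acyc: "acyclic_net Es tail head"
    and unit_cut: "\<forall>k\<in>{1,2,3}. mincut Es tail head (s k) (t k) = 1"
    and delays: "\<forall>a\<in>{1,2,3}. \<forall>b\<in>{1,2,3}. \<forall>p. is_path Es tail head (s a) (t b) p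
                    \<longrightarrow> \<delta> \<le> length p \<and> length p \<le> \<delta> + dmax"
    and n: "n > dmax"
    and ij: "i \<in> {1,2,3}" "j \<in> {1,2,3}"
    and cut_ij: "mincut Es tail head (s i) (t j) \<ge> 1"
  shows "det (Mmat Es tail head s t \<delta> dmax n i j :: ('e, 'a::field) lecpoly mat) \<noteq> 0"
proof
  assume det0: "det (Mmat Es tail head s t \<delta> dmax n i j :: ('e, 'a::field) lecpoly mat) = 0"
  obtain p where P: "is_path Es tail head (s i) (t j) p"
    using conn_of_mincut[OF cut_ij] unfolding connected_net_def by blast
  have D: "distinct p" by (rule path_distinct[OF acyc P])
  have Lb: "\<delta> \<le> length p" "length p \<le> \<delta> + dmax" using delays ij P by blast+
  define d0 where "d0 = length p - \<delta>"
  have d0: "d0 \<le> dmax" using Lb d0_def by simp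
  define V where "V = Vset i j p"
  define M where "M = (Mmat Es tail head s t \<delta> dmax n i j :: ('e, 'a) lecpoly mat)"
  define \<pi> where "\<pi> = (\<lambda>r. if r < n then (r + d0) mod n else r)"
  have n0: "n > 0" using n by simp
  have perm: "\<pi> permutes {0..<n}" unfolding \<pi>_def by (rule shift_permutes[OF n0])
  have entry: "ev V (M $$ (r, c)) = (if c = (r + d0) mod n then 1 else 0)" if "r < n" "c < n" for r c
  proof -
    let ?D = "{d. d \<le> dmax \<and> (r + d) mod n = c}"
    have finD: "finite ?D" by (rule finite_subset[of _ "{..dmax}"]) auto
    have "ev V (M $$ (r, c)) = (\<Sum>d\<in>?D. ev V (Md Es tail head s t \<delta> i j d (int n - 1 - int r) :: ('e,'a) lecpoly))"
      using that unfolding M_def Mmat_def by (simp add: ev_hom.hom_sum)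
    also have "\<dots> = (\<Sum>d\<in>?D. if d = d0 then 1 else 0)"
      unfolding Md_def V_def resp_ev[where s=s and i=i and t=t and j=j, OF fin P D]
      by (rule sum.cong) (use Lb d0_def in auto)
    also have "\<dots> = (if c = (r + d0) mod n then 1 else 0)"
      using finD d0 by (auto simp: sum.delta')
    finally show ?thesis .
  qed
  have eq: "map_mat (ev V) M = mat n n (\<lambda>(r, c). (1\<^sub>m n :: 'a mat) $$ (\<pi> r, c))"
  proof (rule eq_matI)
    show "dim_row (map_mat (ev V) M) = dim_row (mat n n (\<lambda>(r, c). (1\<^sub>m n :: 'a mat) $$ (\<pi> r, c)))"
      by (simp add: M_def Mmat_def)
    show "dim_col (map_mat (ev V) M) = dim_col (mat n n (\<lambda>(r, c). (1\<^sub>m n :: 'a mat) $$ (\<pi> r, c)))"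
      by (simp add: M_def Mmat_def)
    fix r c assume rc: "r < dim_row (mat n n (\<lambda>(r, c). (1\<^sub>m n :: 'a mat) $$ (\<pi> r, c)))"
       "c < dim_col (mat n n (\<lambda>(r, c). (1\<^sub>m n :: 'a mat) $$ (\<pi> r, c)))"
    then have r: "r < n" and c: "c < n" by auto
    have pr: "\<pi> r < n" using r n0 by (simp add: \<pi>_def)
    show "map_mat (ev V) M $$ (r, c) = mat n n (\<lambda>(r, c). (1\<^sub>m n :: 'a mat) $$ (\<pi> r, c)) $$ (r, c)"
      using r c pr entry[OF r c] by (auto simp: M_def Mmat_def \<pi>_def)
  qed
  have "det (map_mat (ev V) M) = signof \<pi> * det (1\<^sub>m n :: 'a mat)"
    unfolding eq by (rule det_permute_rows[OF one_carrier_mat perm])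
  then have "det (map_mat (ev V) M) \<noteq> 0" by (simp add: sign_def)
  moreover have "det (map_mat (ev V) M) = ev V (det M)" by simp
  ultimately show False using det0 M_def by simp
qed

end
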